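(* Let $A$ be a finite set with $N\ge 2$ elements and let $(v_{xy})$ be a Llull matrix on $A$ with CLC structure that is not identically zero. Let $\rho_x=\frac{1}{N-1}\sum_{y\neq x}v_{xy}$ be its mean preference scores and $(\varphi_x)_{x\in A}$ its strengths. Then for all $x,y\in A$: (a) if $\varphi_x>\varphi_y$ then $\rho_x>\rho_y$; (b) if $\rho_x>\rho_y$ then either $\varphi_x>\varphi_y$ or $\varphi_x=\varphi_y=0$.
   Context: A Llull matrix on a finite set $A$ is an assignment to each ordered pair of distinct elements $x\neq y$ of $A$ of a number $v_{xy}\in[0,1]$ such that $v_{xy}+v_{yx}\le 1$. Turnouts: $t_{xy}=v_{xy}+v_{yx}$; margins: $m_{xy}=v_{xy}-v_{yx}$. The matrix has CLC structure if there is a total order $\xi$ on $A$ such that, writing $x<_\xi y$ when $x$ precedes $y$ and $x'$ for the immediate successor of $x$ in $\xi$ (when it exists): (i) $v_{xy}\ge v_{yx}$ whenever $x<_\xi y$; (ii) $v_{xz}=\max(v_{xy},v_{yz})$ whenever $x<_\xi y<_\xi z$; (iii) $v_{zx}=\min(v_{zy},v_{yx})$ whenever $x<_\xi y<_\xi z$; (iv) $0\le t_{xz}-t_{x'z}\le m_{xx'}$ whenever $x'$ exists and $z\notin\{x,x'\}$. Strengths (Zermelo's method): let $\Phi=\{\varphi\in\mathbb{R}^A:\varphi_x>0\ \forall x,\ \sum_x\varphi_x=1\}$ and $F(\varphi)=\prod_{\{x,y\}}\frac{\varphi_x^{v_{xy}}\varphi_y^{v_{yx}}}{(\varphi_x+\varphi_y)^{t_{xy}}}$,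 the product over unordered pairs of distinct elements of $A$. A maximizing sequence is a sequence $\varphi^n\in\Phi$ with $F(\varphi^n)\to\sup_\Phi F$. When the matrix has a top dominant irreducible component (which is the case for non-vanishing Llull matrices with CLC structure), there is a unique $\varphi$ in the closure $\overline{\Phi}$ such that every maximizing sequence converges to $\varphi$; this $\varphi$ is the vector of strengths. (Here irreducible components are the classes of $x\sim y$ iff $x=y$ or both indirect scores $\hat v_{xy},\hat v_{yx}$ are positive, where $\hat v_{xy}$ is the maximum over paths $x=x_0,\dots,x_n=y$ of $\min_i v_{x_ix_{i+1}}$; $x$ dominates $y$ iff $\hat v_{xy}>0=\hat v_{yx}$; a top dominant component dominates all other components.) *)

theory Defs
  imports Complex_Main
begin

definition llull_matrix :: "'a set \<Rightarrow> ('a \<Rightarrow> 'a \<Rightarrow> real) \<Rightarrow> bool" where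
  "llull_matrix A v \<longleftrightarrow> finite A \<and>
     (\<forall>x\<in>A. \<forall>y\<in>A. x \<noteq> y \<longrightarrow> 0 \<le> v x y \<and> v x y \<le> 1 \<and> v x y + v y x \<le> 1)"

definition turnout :: "('a \<Rightarrow> 'a \<Rightarrow> real) \<Rightarrow> 'a \<Rightarrow> 'a \<Rightarrow> real" where
  "turnout v x y = v x y + v y x"

definition margin :: "('a \<Rightarrow> 'a \<Rightarrow> real) \<Rightarrow> 'a \<Rightarrow> 'a \<Rightarrow> real" where
  "margin v x y = v x y - v y x"

(* A total order xi on A is encoded by its ranking r : A -> {0..<card A} (bijective);
   x <_xi y iff r x < r y, and x' (immediate successor of x) is the element of rank r x + 1. *)
definition clc_order :: "'a set \<Rightarrow> ('a \<Rightarrow> 'a \<Rightarrow> real) \<Rightarrow> ('a \<Rightarrow> nat) \<Rightarrow> bool" where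
  "clc_order A v r \<longleftrightarrow> bij_betw r A {0..<card A} \<and>
     (\<forall>x\<in>A. \<forall>y\<in>A. r x < r y \<longrightarrow> v x y \<ge> v y x) \<and>
     (\<forall>x\<in>A. \<forall>y\<in>A. \<forall>z\<in>A. r x < r y \<and> r y < r z \<longrightarrow> v x z = max (v x y) (v y z)) \<and>
     (\<forall>x\<in>A. \<forall>y\<in>A. \<forall>z\<in>A. r x < r y \<and> r y < r z \<longrightarrow> v z x = min (v z y) (v y x)) \<and>
     (\<forall>x\<in>A. \<forall>x'\<in>A. r x' = r x + 1 \<longrightarrow>
        (\<forall>z\<in>A. z \<noteq> x \<and> z \<noteq> x' \<longrightarrow>
           0 \<le> turnout v x z - turnout v x' z \<and> turnout v x z - turnout v x' z \<le> margin v x x'))"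

definition has_CLC :: "'a set \<Rightarrow> ('a \<Rightarrow> 'a \<Rightarrow> real) \<Rightarrow> bool" where
  "has_CLC A v \<longleftrightarrow> (\<exists>r. clc_order A v r)"

definition mean_score :: "'a set \<Rightarrow> ('a \<Rightarrow> 'a \<Rightarrow> real) \<Rightarrow> 'a \<Rightarrow> real" where
  "mean_score A v x = (\<Sum>y\<in>A - {x}. v x y) / (real (card A) - 1)"

definition Phi :: "'a set \<Rightarrow> ('a \<Rightarrow> real) set" where
  "Phi A = {\<phi>. (\<forall>x\<in>A. \<phi> x > 0) \<and> (\<Sum>x\<in>A. \<phi> x) = 1}"

(* F(phi): the product over unordered pairs {x,y} of
   phi_x^v_xy phi_y^v_yx / (phi_x+phi_y)^t_xy, written equivalently as the product over
   ordered pairs (x,y), x ~= y, of (phi_x/(phi_x+phi_y))^v_xy. *)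
definition zermelo_F :: "'a set \<Rightarrow> ('a \<Rightarrow> 'a \<Rightarrow> real) \<Rightarrow> ('a \<Rightarrow> real) \<Rightarrow> real" where
  "zermelo_F A v \<phi> = (\<Prod>(x,y)\<in>{(x,y). x \<in> A \<and> y \<in> A \<and> x \<noteq> y}.
                           (\<phi> x / (\<phi> x + \<phi> y)) powr (v x y))"

definition maximizing_seq :: "'a set \<Rightarrow> ('a \<Rightarrow> 'a \<Rightarrow> real) \<Rightarrow> (nat \<Rightarrow> 'a \<Rightarrow> real) \<Rightarrow> bool" where
  "maximizing_seq A v s \<longleftrightarrow> (\<forall>n. s n \<in> Phi A) \<and>
     (\<lambda>n. zermelo_F A v (s n)) \<longlonglongrightarrow> Sup (zermelo_F A v ` Phi A)"

definition strengths :: "'a set \<Rightarrow> ('a \<Rightarrow> 'a \<Rightarrow> real) \<Rightarrow> ('a \<Rightarrow> real) \<Rightarrow> bool" where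
  "strengths A v \<phi> \<longleftrightarrow> (\<forall>x\<in>A. \<phi> x \<ge> 0) \<and> (\<Sum>x\<in>A. \<phi> x) = 1 \<and>
     (\<forall>s. maximizing_seq A v s \<longrightarrow> (\<forall>x\<in>A. (\<lambda>n. s n x) \<longlonglongrightarrow> \<phi> x))"

end

theory Submission
  imports Defs
begin



definition PP :: "'a set \<Rightarrow> ('a \<times> 'a) set" where
  "PP A = {(x,y). x \<in> A \<and> y \<in> A \<and> x \<noteq> y}"

definition LL :: "'a set \<Rightarrow> ('a \<Rightarrow> 'a \<Rightarrow> real) \<Rightarrow> ('a \<Rightarrow> real) \<Rightarrow> real" where
  "LL A v \<psi> = (\<Sum>(x,y)\<in>PP A. v x y * ln (\<psi> x / (\<psi> x + \<psi> y)))"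

lemma PP_Sigma: "PP A = Sigma A (\<lambda>x. A - {x})"
  unfolding PP_def by auto

lemma finite_PP: "finite A \<Longrightarrow> finite (PP A)"
  unfolding PP_Sigma by auto

lemma F_eq_exp:
  assumes "finite A" "\<forall>x\<in>A. \<psi> x > 0"
  shows "zermelo_F A v \<psi> = exp (LL A v \<psi>)"
proof -
  have "zermelo_F A v \<psi> = (\<Prod>(x,y)\<in>PP A. exp (v x y * ln (\<psi> x / (\<psi> x + \<psi> y))))"
    unfolding zermelo_F_def PP_def
    apply (rule prod.cong[OF refl])
    using assms(2) by (auto simp: powr_def mult.commute) (metis add_pos_pos less_irrefl)+
  also have "\<dots> = exp (LL A v \<psi>)"
    unfolding LL_def using finite_PP[OF assms(1)] by (simp add: exp_sum case_prod_unfold)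
  finally show ?thesis .
qed

lemma sum_split2:
  assumes "finite A" "a \<in> A" "b \<in> A" "a \<noteq> b"
  shows "(\<Sum>x\<in>A. f x) = f a + f b + (\<Sum>x\<in>A-{a,b}. f x)"
proof -
  have "(\<Sum>x\<in>A. f x) = f a + (\<Sum>x\<in>A-{a}. f x)" using assms by (simp add: sum.remove)
  also have "(\<Sum>x\<in>A-{a}. f x) = f b + (\<Sum>x\<in>A-{a}-{b}. f x)" using assms by (intro sum.remove) auto
  also have "A-{a}-{b} = A-{a,b}" by auto
  finally show ?thesis by (simp add: add.assoc)
qed

lemma sum_PP_decomp:
  assumes fin: "finite A" and ab: "a \<in> A" "b \<in> A" "a \<noteq> b"
    and zero: "\<And>x y. x \<notin> {a,b} \<Longrightarrow> y \<notin> {a,b} \<Longrightarrow> D x y = 0"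
  shows "(\<Sum>(x,y)\<in>PP A. D x y) = D a b + D b a + (\<Sum>z\<in>A-{a,b}. D a z + D z a + D b z + D z b)"
proof -
  have "(\<Sum>(x,y)\<in>PP A. D x y) = (\<Sum>x\<in>A. \<Sum>y\<in>A-{x}. D x y)"
    unfolding PP_Sigma using fin by (subst sum.Sigma) auto
  also have "\<dots> = (\<Sum>y\<in>A-{a}. D a y) + (\<Sum>y\<in>A-{b}. D b y) + (\<Sum>z\<in>A-{a,b}. \<Sum>y\<in>A-{z}. D z y)"
    by (rule sum_split2[OF fin ab])
  also have "(\<Sum>y\<in>A-{a}. D a y) = D a b + (\<Sum>z\<in>A-{a,b}. D a z)"
  proof -
    have "(\<Sum>y\<in>A-{a}. D a y) = D a b + (\<Sum>z\<in>A-{a}-{b}. D a z)" using fin ab by (intro sum.remove) auto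
    moreover have "A-{a}-{b} = A-{a,b}" by auto
    ultimately show ?thesis by simp
  qed
  also have "(\<Sum>y\<in>A-{b}. D b y) = D b a + (\<Sum>z\<in>A-{a,b}. D b z)"
  proof -
    have "(\<Sum>y\<in>A-{b}. D b y) = D b a + (\<Sum>z\<in>A-{b}-{a}. D b z)" using fin ab by (intro sum.remove) auto
    moreover have "A-{b}-{a} = A-{a,b}" by auto
    ultimately show ?thesis by simp
  qed
  also have "(\<Sum>z\<in>A-{a,b}. \<Sum>y\<in>A-{z}. D z y) = (\<Sum>z\<in>A-{a,b}. D z a + D z b)"
  proof (rule sum.cong[OF refl])
    fix z assume z: "z \<in> A-{a,b}"
    have "(\<Sum>y\<in>A-{z}. D z y) = D z a + D z b + (\<Sum>y\<in>A-{z}-{a,b}. D z y)"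
      using z ab fin by (intro sum_split2) auto
    moreover have "(\<Sum>y\<in>A-{z}-{a,b}. D z y) = 0"
      using z by (intro sum.neutral) (auto intro: zero)
    ultimately show "(\<Sum>y\<in>A-{z}. D z y) = D z a + D z b" by simp
  qed
  finally show ?thesis by (simp add: sum.distrib algebra_simps)
qed




locale clc_ctx =
  fixes A :: "'a set" and v :: "'a \<Rightarrow> 'a \<Rightarrow> real" and r :: "'a \<Rightarrow> nat"
  assumes fin: "finite A" and ll: "llull_matrix A v" and co: "clc_order A v r"
begin

lemma vb: "x \<in> A \<Longrightarrow> y \<in> A \<Longrightarrow> x \<noteq> y \<Longrightarrow> 0 \<le> v x y \<and> v x y \<le> 1 \<and> v x y + v y x \<le> 1"
  using ll unfolding llull_matrix_def by blast

lemma bij: "bij_betw r A {0..<card A}" using co unfolding clc_order_def by blast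

lemma r_inj: "x \<in> A \<Longrightarrow> y \<in> A \<Longrightarrow> r x = r y \<Longrightarrow> x = y"
  using bij by (meson bij_betw_def inj_onD)

lemma c1: "x \<in> A \<Longrightarrow> y \<in> A \<Longrightarrow> r x < r y \<Longrightarrow> v x y \<ge> v y x"
  using co unfolding clc_order_def by blast

lemma c2: "x \<in> A \<Longrightarrow> y \<in> A \<Longrightarrow> z \<in> A \<Longrightarrow> r x < r y \<Longrightarrow> r y < r z \<Longrightarrow> v x z = max (v x y) (v y z)"
  using co unfolding clc_order_def by blast

lemma c3: "x \<in> A \<Longrightarrow> y \<in> A \<Longrightarrow> z \<in> A \<Longrightarrow> r x < r y \<Longrightarrow> r y < r z \<Longrightarrow> v z x = min (v z y) (v y x)"
  using co unfolding clc_order_def by blast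

lemma c4: "x \<in> A \<Longrightarrow> x' \<in> A \<Longrightarrow> r x' = r x + 1 \<Longrightarrow> z \<in> A \<Longrightarrow> z \<noteq> x \<Longrightarrow> z \<noteq> x' \<Longrightarrow>
   0 \<le> turnout v x z - turnout v x' z \<and> turnout v x z - turnout v x' z \<le> margin v x x'"
  using co unfolding clc_order_def by blast

lemma consec_d:
  assumes a: "a \<in> A" and b: "b \<in> A" and rab: "r b = r a + 1" and z: "z \<in> A - {a,b}"
  shows "v b z \<le> v a z" and "v z a \<le> v z b"
proof -
  have zA: "z \<in> A" and za: "z \<noteq> a" and zb: "z \<noteq> b" using z by auto
  have "r z \<noteq> r a" using r_inj[OF zA a] za by blast
  moreover have "r z \<noteq> r b" using r_inj[OF zA b] zb by blast
  ultimately have "r z < r a \<or> r b < r z" using rab by linarith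
  then have "v b z \<le> v a z \<and> v z a \<le> v z b"
  proof
    assume h: "r z < r a"
    have "v b z = min (v b a) (v a z)" using c3[OF zA a b h] rab by simp
    moreover have "v z b = max (v z a) (v a b)" using c2[OF zA a b h] rab by simp
    ultimately show ?thesis by simp
  next
    assume h: "r b < r z"
    have "v a z = max (v a b) (v b z)" using c2[OF a b zA _ h] rab by simp
    moreover have "v z a = min (v z b) (v b a)" using c3[OF a b zA _ h] rab by simp
    ultimately show ?thesis by simp
  qed
  then show "v b z \<le> v a z" and "v z a \<le> v z b" by auto
qed

lemma consec_m: "a \<in> A \<Longrightarrow> b \<in> A \<Longrightarrow> r b = r a + 1 \<Longrightarrow> margin v a b \<ge> 0"
  using c1[of a b] unfolding margin_def by simp

lemma consec_e: "a \<in> A \<Longrightarrow> b \<in> A \<Longrightarrow> r b = r a + 1 \<Longrightarrow> z \<in> A - {a,b} \<Longrightarrow>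
   0 \<le> turnout v a z - turnout v b z \<and> turnout v a z - turnout v b z \<le> margin v a b"
  using c4[of a b z] by auto

definition KK :: "'a \<Rightarrow> 'a \<Rightarrow> real" where
  "KK a b = margin v a b + (\<Sum>z\<in>A-{a,b}. (v a z - v b z) - (turnout v a z - turnout v b z))"

lemma KK_nonneg: "a \<in> A \<Longrightarrow> b \<in> A \<Longrightarrow> r b = r a + 1 \<Longrightarrow> KK a b \<ge> 0"
  unfolding KK_def using consec_m[of a b] consec_d[of a b]
  by (intro add_nonneg_nonneg sum_nonneg) (auto simp: turnout_def)

lemma pair_bound:
  fixes p q p' q' vab vba :: real
  assumes p: "p > 0" and q: "q > 0" and p': "p' > 0" and q': "q' > 0"
    and sumeq: "p' + q' = p + q" and prod: "p' * q' \<le> p * q"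
    and vab: "0 \<le> vba" "vba \<le> 1"
  shows "vab * (ln (p' / (p' + q')) - ln (p / (p + q))) + vba * (ln (q' / (q' + p')) - ln (q / (q + p)))
     \<ge> (vab - vba) * (ln p' - ln p) - (ln (p * q) - ln (p' * q'))"
proof -
  have al: "ln (p' * q') \<le> ln (p * q)" by (rule ln_mono[OF prod]) (simp add: p' q')
  have e1: "ln (p' * q') = ln p' + ln q'" "ln (p * q) = ln p + ln q" using p q p' q' by (auto simp: ln_mult)
  have e2: "ln (p' / (p' + q')) = ln p' - ln (p+q)" "ln (p / (p + q)) = ln p - ln (p+q)"
     "ln (q' / (q' + p')) = ln q' - ln (p+q)" "ln (q / (q + p)) = ln q - ln (p+q)"
    using p q p' q' sumeq by (auto simp: ln_div add.commute)
  have "0 \<le> (1 - vba) * (ln (p * q) - ln (p' * q'))" using vab al by simp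
  moreover have "vab * (ln (p' / (p' + q')) - ln (p / (p + q))) + vba * (ln (q' / (q' + p')) - ln (q / (q + p)))
     - ((vab - vba) * (ln p' - ln p) - (ln (p * q) - ln (p' * q'))) = (1 - vba) * (ln (p * q) - ln (p' * q'))"
    unfolding e1 e2 by (simp add: algebra_simps)
  ultimately show ?thesis by linarith
qed

lemma z_bound:
  fixes p q p' q' w vaz vza vbz vzb :: real
  assumes p: "p > 0" and q: "q > 0" and p': "p' > 0" and q': "q' > 0" and w: "w > 0"
    and sumeq: "p' + q' = p + q" and prod: "p' * q' \<le> p * q"
    and vbz: "0 \<le> vbz" "vbz \<le> 1" and vzb: "0 \<le> vzb"
    and cond: "(p \<le> p' \<and> vza + vaz - vzb - vbz \<ge> 0) \<or> vaz + vza - vbz - vzb = 0"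
  shows "vaz * (ln (p' / (p' + w)) - ln (p / (p + w))) + vza * (ln (w / (w + p')) - ln (w / (w + p)))
       + vbz * (ln (q' / (q' + w)) - ln (q / (q + w))) + vzb * (ln (w / (w + q')) - ln (w / (w + q)))
     \<ge> ((vaz - vbz) - (vaz + vza - vbz - vzb)) * (ln p' - ln p) - (ln (p * q) - ln (p' * q'))"
proof -
  define e where "e = vaz + vza - vbz - vzb"
  define X where "X = ln p' - ln p"
  define Y where "Y = ln (p' + w) - ln (p + w)"
  have al: "ln (p' * q') \<le> ln (p * q)" by (rule ln_mono[OF prod]) (simp add: p' q')
  have e1: "ln (p' * q') = ln p' + ln q'" "ln (p * q) = ln p + ln q" using p q p' q' by (auto simp: ln_mult)
  have be: "(p' + w) * (q' + w) \<le> (p + w) * (q + w)"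
  proof -
    have "(p' + w) * (q' + w) = p' * q' + w * (p' + q') + w * w" by (simp add: algebra_simps)
    also have "\<dots> \<le> p * q + w * (p + q) + w * w" using prod sumeq by simp
    also have "\<dots> = (p + w) * (q + w)" by (simp add: algebra_simps)
    finally show ?thesis .
  qed
  have be2: "ln ((p' + w) * (q' + w)) \<le> ln ((p + w) * (q + w))" by (rule ln_mono[OF be]) (simp add: p' q' w add_pos_pos)
  have e3: "ln ((p' + w) * (q' + w)) = ln (p' + w) + ln (q' + w)" "ln ((p + w) * (q + w)) = ln (p + w) + ln (q + w)"
    using p q p' q' w by (auto simp: ln_mult)
  have e2: "ln (p' / (p' + w)) = ln p' - ln (p' + w)" "ln (p / (p + w)) = ln p - ln (p + w)"
     "ln (w / (w + p')) = ln w - ln (p' + w)" "ln (w / (w + p)) = ln w - ln (p + w)"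
     "ln (q' / (q' + w)) = ln q' - ln (q' + w)" "ln (q / (q + w)) = ln q - ln (q + w)"
     "ln (w / (w + q')) = ln w - ln (q' + w)" "ln (w / (w + q)) = ln w - ln (q + w)"
    using p q p' q' w by (auto simp: ln_div add.commute)
  have t3: "0 \<le> e * (X - Y)"
    using cond
  proof
    assume h: "p \<le> p' \<and> vza + vaz - vzb - vbz \<ge> 0"
    have "(p' + w) * p \<le> p' * (p + w)" using h w by (simp add: algebra_simps)
    then have "ln ((p' + w) * p) \<le> ln (p' * (p + w))" using p p' w by simp
    then have "Y \<le> X" unfolding X_def Y_def using p p' w by (simp add: ln_mult)
    moreover have "e \<ge> 0" using h unfolding e_def by simp
    ultimately show ?thesis by simp
  next
    assume "vaz + vza - vbz - vzb = 0"
    then show ?thesis unfolding e_def by simp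
  qed
  have t1: "0 \<le> (1 - vbz) * (ln (p * q) - ln (p' * q'))" using vbz al by simp
  have t2: "0 \<le> (vbz + vzb) * (ln ((p + w) * (q + w)) - ln ((p' + w) * (q' + w)))" using vbz vzb be2 by simp
  have "vaz * (ln (p' / (p' + w)) - ln (p / (p + w))) + vza * (ln (w / (w + p')) - ln (w / (w + p)))
       + vbz * (ln (q' / (q' + w)) - ln (q / (q + w))) + vzb * (ln (w / (w + q')) - ln (w / (w + q)))
     - (((vaz - vbz) - (vaz + vza - vbz - vzb)) * (ln p' - ln p) - (ln (p * q) - ln (p' * q')))
     = (1 - vbz) * (ln (p * q) - ln (p' * q')) + (vbz + vzb) * (ln ((p + w) * (q + w)) - ln ((p' + w) * (q' + w)))
       + e * (X - Y)"
    unfolding e1 e2 e3 e_def X_def Y_def by (simp add: algebra_simps)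
  with t1 t2 t3 show ?thesis by linarith
qed

end



context clc_ctx begin

lemma card_minus2: "a \<in> A \<Longrightarrow> b \<in> A \<Longrightarrow> a \<noteq> b \<Longrightarrow> real (card (A - {a,b})) = real (card A) - 2"
proof -
  assume h: "a \<in> A" "b \<in> A" "a \<noteq> b"
  have "card (A - {a,b}) = card A - card {a,b}" using h fin by (intro card_Diff_subset) auto
  moreover have "card {a,b} = 2" using h by simp
  moreover have "card A \<ge> 2" using h fin
    by (metis \<open>card {a, b} = 2\<close> card_mono empty_subsetI insert_subset)
  ultimately show ?thesis by (simp add: of_nat_diff)
qed

lemma exchange:
  assumes a: "a \<in> A" and b: "b \<in> A" and rab: "r b = r a + 1"
    and psi: "\<forall>x\<in>A. \<psi> x > 0"
    and p': "p' > 0" and q': "q' > 0"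
    and sumeq: "p' + q' = \<psi> a + \<psi> b"
    and prod: "p' * q' \<le> \<psi> a * \<psi> b"
    and cond: "\<psi> a \<le> p' \<or> (\<forall>z\<in>A-{a,b}. turnout v a z - turnout v b z = 0)"
  shows "LL A v (\<psi>(a := p', b := q')) - LL A v \<psi> \<ge>
     KK a b * (ln p' - ln (\<psi> a)) - (real (card A) - 1) * (ln (\<psi> a * \<psi> b) - ln (p' * q'))"
proof -
  define \<psi>' where "\<psi>' = \<psi>(a := p', b := q')"
  have ab: "a \<noteq> b" using rab by auto
  define D where "D x y = v x y * (ln (\<psi>' x / (\<psi>' x + \<psi>' y)) - ln (\<psi> x / (\<psi> x + \<psi> y)))" for x y
  define \<alpha> where "\<alpha> = ln (\<psi> a * \<psi> b) - ln (p' * q')"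
  define X where "X = ln p' - ln (\<psi> a)"
  have pa: "\<psi> a > 0" and pb: "\<psi> b > 0" using psi a b by auto
  have ya: "\<psi>' a = p'" and yb: "\<psi>' b = q'" using ab unfolding \<psi>'_def by auto
  have "LL A v \<psi>' - LL A v \<psi> = (\<Sum>(x,y)\<in>PP A. D x y)"
    unfolding LL_def D_def by (simp add: sum_subtractf[symmetric] right_diff_distrib case_prod_unfold)
  also have "\<dots> = D a b + D b a + (\<Sum>z\<in>A-{a,b}. D a z + D z a + D b z + D z b)"
    by (rule sum_PP_decomp[OF fin a b ab]) (simp add: D_def \<psi>'_def)
  finally have eq: "LL A v \<psi>' - LL A v \<psi> = D a b + D b a + (\<Sum>z\<in>A-{a,b}. D a z + D z a + D b z + D z b)" .
  have vba: "0 \<le> v b a" "v b a \<le> 1" using vb[OF b a] ab by auto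
  have hab: "D a b + D b a \<ge> margin v a b * X - \<alpha>"
    using pair_bound[OF pa pb p' q' sumeq prod vba, of "v a b"]
    unfolding D_def ya yb margin_def X_def \<alpha>_def by simp
  have hz: "D a z + D z a + D b z + D z b \<ge> ((v a z - v b z) - (turnout v a z - turnout v b z)) * X - \<alpha>"
    if z: "z \<in> A - {a,b}" for z
  proof -
    have zA: "z \<in> A" and za: "z \<noteq> a" and zb: "z \<noteq> b" using z by auto
    have pz: "\<psi> z > 0" using psi zA by auto
    have yz: "\<psi>' z = \<psi> z" using za zb unfolding \<psi>'_def by auto
    have vbz: "0 \<le> v b z" "v b z \<le> 1" and vzb: "0 \<le> v z b" using vb[OF b zA] vb[OF zA b] zb by auto
    have cnd: "(\<psi> a \<le> p' \<and> v z a + v a z - v z b - v b z \<ge> 0) \<or> v a z + v z a - v b z - v z b = 0"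
      using cond consec_e[OF a b rab z] z unfolding turnout_def by auto
    show ?thesis
      using z_bound[OF pa pb p' q' pz sumeq prod vbz vzb cnd]
      unfolding D_def ya yb yz X_def \<alpha>_def turnout_def by simp
  qed
  have "(\<Sum>z\<in>A-{a,b}. D a z + D z a + D b z + D z b) \<ge>
        (\<Sum>z\<in>A-{a,b}. ((v a z - v b z) - (turnout v a z - turnout v b z)) * X - \<alpha>)"
    by (rule sum_mono) (rule hz)
  also have "(\<Sum>z\<in>A-{a,b}. ((v a z - v b z) - (turnout v a z - turnout v b z)) * X - \<alpha>) =
      (\<Sum>z\<in>A-{a,b}. ((v a z - v b z) - (turnout v a z - turnout v b z))) * X - (real (card A) - 2) * \<alpha>"
    using card_minus2[OF a b ab] by (simp only: sum_subtractf sum_distrib_right[symmetric] sum_constant)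
  finally have hs: "(\<Sum>z\<in>A-{a,b}. D a z + D z a + D b z + D z b) \<ge>
      (\<Sum>z\<in>A-{a,b}. ((v a z - v b z) - (turnout v a z - turnout v b z))) * X - (real (card A) - 2) * \<alpha>" .
  have "KK a b * X - (real (card A) - 1) * \<alpha> = (margin v a b * X - \<alpha>) +
      ((\<Sum>z\<in>A-{a,b}. ((v a z - v b z) - (turnout v a z - turnout v b z))) * X - (real (card A) - 2) * \<alpha>)"
    unfolding KK_def by (simp add: algebra_simps)
  with eq hab hs show ?thesis unfolding \<psi>'_def X_def \<alpha>_def by linarith
qed

end



lemma upd_Phi:
  assumes fin: "finite A" and psi: "\<psi> \<in> Phi A" and a: "a \<in> A" and b: "b \<in> A" and ab: "a \<noteq> b"
    and p': "p' > 0" and q': "q' > 0" and s: "p' + q' = \<psi> a + \<psi> b"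
  shows "\<psi>(a := p', b := q') \<in> Phi A"
proof -
  have pos: "\<forall>x\<in>A. \<psi> x > 0" and one: "(\<Sum>x\<in>A. \<psi> x) = 1" using psi unfolding Phi_def by auto
  have "(\<Sum>x\<in>A. (\<psi>(a := p', b := q')) x) = p' + q' + (\<Sum>x\<in>A-{a,b}. (\<psi>(a := p', b := q')) x)"
    using sum_split2[OF fin a b ab, of "\<psi>(a := p', b := q')"] ab by simp
  also have "(\<Sum>x\<in>A-{a,b}. (\<psi>(a := p', b := q')) x) = (\<Sum>x\<in>A-{a,b}. \<psi> x)"
    by (rule sum.cong) auto
  also have "p' + q' + (\<Sum>x\<in>A-{a,b}. \<psi> x) = (\<Sum>x\<in>A. \<psi> x)"
    using sum_split2[OF fin a b ab, of \<psi>] s by simp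
  finally have "(\<Sum>x\<in>A. (\<psi>(a := p', b := q')) x) = (\<Sum>x\<in>A. \<psi> x)" .
  with one have "(\<Sum>x\<in>A. (\<psi>(a := p', b := q')) x) = 1" by linarith
  moreover have "\<forall>x\<in>A. (\<psi>(a := p', b := q')) x > 0" using pos p' q' by auto
  ultimately show ?thesis unfolding Phi_def mem_Collect_eq by (intro conjI)
qed

lemma LL_nonpos:
  assumes ll: "llull_matrix A v" and pos: "\<forall>x\<in>A. \<psi> x > 0"
  shows "LL A v \<psi> \<le> 0"
  unfolding LL_def
proof (rule sum_nonpos)
  fix pr assume "pr \<in> PP A"
  then obtain x y where pr: "pr = (x,y)" and x: "x \<in> A" and y: "y \<in> A" and xy: "x \<noteq> y"
    unfolding PP_def by auto
  have "0 \<le> v x y" using ll x y xy unfolding llull_matrix_def by blast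
  moreover have "ln (\<psi> x / (\<psi> x + \<psi> y)) \<le> 0"
  proof -
    have px: "\<psi> x > 0" and py: "\<psi> y > 0" using pos x y by auto
    then have "\<psi> x / (\<psi> x + \<psi> y) \<le> 1" by simp
    moreover have "\<psi> x / (\<psi> x + \<psi> y) > 0" using px py by simp
    ultimately show ?thesis by simp
  qed
  ultimately show "(case pr of (x, y) \<Rightarrow> v x y * ln (\<psi> x / (\<psi> x + \<psi> y))) \<le> 0"
    unfolding pr by (simp add: mult_nonneg_nonpos)
qed

definition SS :: "'a set \<Rightarrow> ('a \<Rightarrow> 'a \<Rightarrow> real) \<Rightarrow> real" where
  "SS A v = Sup (zermelo_F A v ` Phi A)"

lemma Phi_ne: "finite A \<Longrightarrow> A \<noteq> {} \<Longrightarrow> (\<lambda>_. 1 / real (card A)) \<in> Phi A"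
  unfolding Phi_def by (simp add: card_gt_0_iff)

lemma F_le_1: "finite A \<Longrightarrow> llull_matrix A v \<Longrightarrow> \<psi> \<in> Phi A \<Longrightarrow> zermelo_F A v \<psi> \<le> 1"
  using F_eq_exp[of A \<psi> v] LL_nonpos[of A v \<psi>] unfolding Phi_def by simp

lemma F_pos: "finite A \<Longrightarrow> \<psi> \<in> Phi A \<Longrightarrow> zermelo_F A v \<psi> > 0"
  using F_eq_exp[of A \<psi> v] unfolding Phi_def by simp

lemma bdd: "finite A \<Longrightarrow> llull_matrix A v \<Longrightarrow> bdd_above (zermelo_F A v ` Phi A)"
  using F_le_1 by (meson bdd_aboveI2)

lemma F_le_SS: "finite A \<Longrightarrow> llull_matrix A v \<Longrightarrow> \<psi> \<in> Phi A \<Longrightarrow> zermelo_F A v \<psi> \<le> SS A v"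
  unfolding SS_def by (rule cSup_upper) (auto intro: bdd)

lemma max_exists:
  assumes fin: "finite A" and ne: "A \<noteq> {}" and ll: "llull_matrix A v"
  shows "\<exists>s. maximizing_seq A v s"
proof -
  have ne2: "zermelo_F A v ` Phi A \<noteq> {}" using Phi_ne[OF fin ne] by blast
  have "\<forall>n. \<exists>\<psi>. \<psi> \<in> Phi A \<and> SS A v - inverse (real (Suc n)) < zermelo_F A v \<psi>"
  proof
    fix n
    have "SS A v - inverse (real (Suc n)) < SS A v" by simp
    then have "\<exists>y\<in>zermelo_F A v ` Phi A. SS A v - inverse (real (Suc n)) < y"
      unfolding SS_def using less_cSup_iff[OF ne2 bdd[OF fin ll]] by blast
    then show "\<exists>\<psi>. \<psi> \<in> Phi A \<and> SS A v - inverse (real (Suc n)) < zermelo_F A v \<psi>" by blast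
  qed
  from choice[OF this] obtain s where s0: "\<forall>n. s n \<in> Phi A \<and> SS A v - inverse (real (Suc n)) < zermelo_F A v (s n)"
    by blast
  then have s: "\<And>n. s n \<in> Phi A" "\<And>n. SS A v - inverse (real (Suc n)) < zermelo_F A v (s n)"
    by auto
  have "(\<lambda>n. zermelo_F A v (s n)) \<longlonglongrightarrow> SS A v"
  proof (rule tendsto_sandwich[of "\<lambda>n. SS A v - inverse (real (Suc n))" _ _ "\<lambda>n. SS A v"])
    show "\<forall>\<^sub>F n in sequentially. SS A v - inverse (real (Suc n)) \<le> zermelo_F A v (s n)"
      by (intro always_eventually allI less_imp_le s(2))
    show "\<forall>\<^sub>F n in sequentially. zermelo_F A v (s n) \<le> SS A v"
      by (intro always_eventually allI F_le_SS[OF fin ll s(1)])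
    show "(\<lambda>n. SS A v - inverse (real (Suc n))) \<longlonglongrightarrow> SS A v"
      using tendsto_diff[OF tendsto_const LIMSEQ_inverse_real_of_nat, of "SS A v"] by simp
  qed simp
  then show ?thesis using s(1) unfolding maximizing_seq_def SS_def by blast
qed

lemma max_transfer:
  assumes fin: "finite A" and ll: "llull_matrix A v" and s: "maximizing_seq A v s"
    and t: "\<And>n. t n \<in> Phi A" and ev: "\<forall>\<^sub>F n in sequentially. zermelo_F A v (s n) \<le> zermelo_F A v (t n)"
  shows "maximizing_seq A v t"
proof -
  have lim: "(\<lambda>n. zermelo_F A v (s n)) \<longlonglongrightarrow> SS A v" using s unfolding maximizing_seq_def SS_def by (rule conjunct2)
  have up: "\<forall>\<^sub>F n in sequentially. zermelo_F A v (t n) \<le> SS A v"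
    by (intro always_eventually allI F_le_SS[OF fin ll t])
  have "(\<lambda>n. zermelo_F A v (t n)) \<longlonglongrightarrow> SS A v"
    by (rule tendsto_sandwich[OF ev up lim tendsto_const])
  then show ?thesis unfolding maximizing_seq_def SS_def using t by (intro conjI allI)
qed




lemma num_bound:
  fixes K nn p q \<delta> :: real
  assumes K: "K > 0" and nn: "nn \<ge> 1" and q: "q > 0" and qp: "q \<le> p" and pq: "p - q \<le> \<delta>"
    and d: "\<delta> > 0" and d2: "\<delta> \<le> q / 2" and d3: "\<delta> \<le> K * q / (8 * nn)"
  shows "nn * (ln (p * q) - ln ((p + \<delta>) * (q - \<delta>))) \<le> K * (ln (p + \<delta>) - ln p)"
proof -
  have p: "p > 0" using q qp by simp
  have pd: "p + \<delta> > 0" using p d by simp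
  have qd: "q - \<delta> \<ge> q / 2" using d2 by simp
  have qd0: "q - \<delta> > 0" using qd q by simp
  have A: "\<delta> / (p + \<delta>) \<le> ln (p + \<delta>) - ln p"
  proof -
    have "ln (p / (p + \<delta>)) \<le> p / (p + \<delta>) - 1" using p pd by (intro ln_le_minus_one) simp
    moreover have "ln (p / (p + \<delta>)) = ln p - ln (p + \<delta>)" using p pd by (simp add: ln_div)
    moreover have "p / (p + \<delta>) - 1 = - (\<delta> / (p + \<delta>))" using pd by (simp add: field_simps)
    ultimately show ?thesis by linarith
  qed
  have B: "ln (p * q) - ln ((p + \<delta>) * (q - \<delta>)) \<le> 4 * \<delta>^2 / ((p + \<delta>) * q)"
  proof -
    have pos: "(p + \<delta>) * (q - \<delta>) > 0" using pd qd0 by simp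
    have f1: "ln ((p * q) / ((p + \<delta>) * (q - \<delta>))) \<le> (p * q) / ((p + \<delta>) * (q - \<delta>)) - 1"
      using p q pos pd qd0 by (intro ln_le_minus_one) simp
    have f2: "ln ((p * q) / ((p + \<delta>) * (q - \<delta>))) = ln (p * q) - ln ((p + \<delta>) * (q - \<delta>))"
      using p q pos pd qd0 by (simp add: ln_div)
    have f3: "(p * q) / ((p + \<delta>) * (q - \<delta>)) - 1 = (p * q - (p + \<delta>) * (q - \<delta>)) / ((p + \<delta>) * (q - \<delta>))"
      using pos by (simp add: field_simps)
    have f4: "(p * q - (p + \<delta>) * (q - \<delta>)) / ((p + \<delta>) * (q - \<delta>)) \<le> (2 * \<delta>^2) / ((p + \<delta>) * (q / 2))"
    proof (rule frac_le)
      show "0 \<le> 2 * \<delta>^2" by simp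
      have "p * q - (p + \<delta>) * (q - \<delta>) = \<delta> * (p - q) + \<delta>^2" by (simp add: algebra_simps power2_eq_square)
      also have "\<dots> \<le> \<delta> * \<delta> + \<delta>^2" using pq d by (intro add_mono mult_left_mono) auto
      finally show "p * q - (p + \<delta>) * (q - \<delta>) \<le> 2 * \<delta>^2" by (simp add: power2_eq_square)
      show "0 < (p + \<delta>) * (q / 2)" using pd q by simp
      show "(p + \<delta>) * (q / 2) \<le> (p + \<delta>) * (q - \<delta>)" using pd qd by (intro mult_left_mono) auto
    qed
    have f5: "(2 * \<delta>^2) / ((p + \<delta>) * (q / 2)) = 4 * \<delta>^2 / ((p + \<delta>) * q)"
      using pd q by (simp add: field_simps)
    have "ln (p * q) - ln ((p + \<delta>) * (q - \<delta>)) \<le> (p * q) / ((p + \<delta>) * (q - \<delta>)) - 1"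
      using f1 f2 by simp
    also have "\<dots> \<le> (2 * \<delta>^2) / ((p + \<delta>) * (q / 2))" using f3 f4 by simp
    also have "\<dots> = 4 * \<delta>^2 / ((p + \<delta>) * q)" by (rule f5)
    finally show ?thesis .
  qed
  have C: "nn * (4 * \<delta>^2 / ((p + \<delta>) * q)) \<le> K * (\<delta> / (p + \<delta>))"
  proof -
    have eq: "nn * (4 * \<delta>^2 / ((p + \<delta>) * q)) = (\<delta> / (p + \<delta>)) * (4 * nn * \<delta> / q)"
      using pd q by (simp add: field_simps power2_eq_square)
    have "8 * nn * \<delta> \<le> K * q" using d3 nn by (simp add: field_simps)
    then have "4 * nn * \<delta> \<le> K * q" using mult_nonneg_nonneg[of nn \<delta>] nn d by linarith
    then have "4 * nn * \<delta> / q \<le> K" using q by (simp add: field_simps)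
    then have "(\<delta> / (p + \<delta>)) * (4 * nn * \<delta> / q) \<le> (\<delta> / (p + \<delta>)) * K"
      using pd d by (intro mult_left_mono) auto
    then show ?thesis unfolding eq by (simp only: mult.commute)
  qed
  have "nn * (ln (p * q) - ln ((p + \<delta>) * (q - \<delta>))) \<le> nn * (4 * \<delta>^2 / ((p + \<delta>) * q))"
    using B nn by (intro mult_left_mono) auto
  also have "\<dots> \<le> K * (\<delta> / (p + \<delta>))" by (rule C)
  also have "\<dots> \<le> K * (ln (p + \<delta>) - ln p)" using A K by (intro mult_left_mono) auto
  finally show ?thesis .
qed




context clc_ctx begin

lemma Phi_pos: "\<psi> \<in> Phi A \<Longrightarrow> \<forall>x\<in>A. \<psi> x > 0" unfolding Phi_def by auto

lemma F_mono_LL: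
  assumes "\<psi> \<in> Phi A" "\<psi>' \<in> Phi A" "LL A v \<psi> \<le> LL A v \<psi>'"
  shows "zermelo_F A v \<psi> \<le> zermelo_F A v \<psi>'"
  using F_eq_exp[OF fin Phi_pos[OF assms(1)], of v] F_eq_exp[OF fin Phi_pos[OF assms(2)], of v] assms(3)
  by simp

lemma swap_Phi:
  assumes a: "a \<in> A" and b: "b \<in> A" and ab: "a \<noteq> b" and psi: "\<psi> \<in> Phi A"
  shows "\<psi>(a := \<psi> b, b := \<psi> a) \<in> Phi A"
  using upd_Phi[OF fin psi a b ab] Phi_pos[OF psi] a b by simp

lemma swap_ge:
  assumes a: "a \<in> A" and b: "b \<in> A" and rab: "r b = r a + 1" and psi: "\<psi> \<in> Phi A"
    and cond: "\<psi> a \<le> \<psi> b \<or> (KK a b = 0 \<and> (\<forall>z\<in>A-{a,b}. turnout v a z - turnout v b z = 0))"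
  shows "zermelo_F A v \<psi> \<le> zermelo_F A v (\<psi>(a := \<psi> b, b := \<psi> a))"
proof -
  have ab: "a \<noteq> b" using rab by auto
  have pos: "\<forall>x\<in>A. \<psi> x > 0" using Phi_pos[OF psi] .
  have pa: "\<psi> a > 0" and pb: "\<psi> b > 0" using pos a b by auto
  have ex: "LL A v (\<psi>(a := \<psi> b, b := \<psi> a)) - LL A v \<psi> \<ge>
     KK a b * (ln (\<psi> b) - ln (\<psi> a)) - (real (card A) - 1) * (ln (\<psi> a * \<psi> b) - ln (\<psi> b * \<psi> a))"
    using cond by (intro exchange[OF a b rab pos pb pa]) auto
  have "KK a b * (ln (\<psi> b) - ln (\<psi> a)) \<ge> 0"
    using cond
  proof
    assume "\<psi> a \<le> \<psi> b"
    then have "ln (\<psi> a) \<le> ln (\<psi> b)" using pa pb by simp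
    then show ?thesis using KK_nonneg[OF a b rab] by simp
  qed simp
  then have "LL A v \<psi> \<le> LL A v (\<psi>(a := \<psi> b, b := \<psi> a))" using ex by (simp add: mult.commute)
  then show ?thesis by (rule F_mono_LL[OF psi swap_Phi[OF a b ab psi]])
qed

lemma phi_limits:
  assumes str: "strengths A v \<phi>" and s: "maximizing_seq A v s" and x: "x \<in> A"
  shows "(\<lambda>n. s n x) \<longlonglongrightarrow> \<phi> x"
  using str s x unfolding strengths_def by blast

lemma get_max:
  assumes "a \<in> A"
  obtains s where "maximizing_seq A v s"
  using max_exists[OF fin _ ll] assms by blast

lemma maxseq_Phi: "maximizing_seq A v s \<Longrightarrow> s n \<in> Phi A"
  unfolding maximizing_seq_def by blast

lemma sorted_seq:
  assumes a: "a \<in> A" and b: "b \<in> A" and rab: "r b = r a + 1" and s: "maximizing_seq A v s"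
  obtains t where "maximizing_seq A v t" "\<And>n. t n b \<le> t n a" "\<And>n. t n a = max (s n a) (s n b)"
proof -
  have ab: "a \<noteq> b" using rab by auto
  define t where "t n = (if s n a < s n b then (s n)(a := s n b, b := s n a) else s n)" for n
  have tP: "t n \<in> Phi A" for n
    unfolding t_def using swap_Phi[OF a b ab maxseq_Phi[OF s]] maxseq_Phi[OF s] by simp
  have "zermelo_F A v (s n) \<le> zermelo_F A v (t n)" for n
    unfolding t_def using swap_ge[OF a b rab maxseq_Phi[OF s]] by simp
  then have "maximizing_seq A v t"
    by (intro max_transfer[OF fin ll s tP] always_eventually allI)
  moreover have "t n b \<le> t n a" for n unfolding t_def using ab by auto
  moreover have "t n a = max (s n a) (s n b)" for n unfolding t_def using ab by auto
  ultimately show ?thesis using that by blast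
qed

lemma phi_mono:
  assumes str: "strengths A v \<phi>" and a: "a \<in> A" and b: "b \<in> A" and rab: "r b = r a + 1"
  shows "\<phi> b \<le> \<phi> a"
proof -
  obtain s where s: "maximizing_seq A v s" using get_max[OF a] by blast
  obtain t where t: "maximizing_seq A v t" "\<And>n. t n a = max (s n a) (s n b)"
    using sorted_seq[OF a b rab s] by blast
  have "(\<lambda>n. t n a) \<longlonglongrightarrow> \<phi> a" by (rule phi_limits[OF str t(1) a])
  moreover have "(\<lambda>n. t n a) \<longlonglongrightarrow> max (\<phi> a) (\<phi> b)"
    unfolding t(2) by (intro tendsto_max phi_limits[OF str s] a b)
  ultimately have "\<phi> a = max (\<phi> a) (\<phi> b)" by (rule LIMSEQ_unique)
  then show ?thesis by (simp add: max_def split: if_splits)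
qed

lemma phi_clone:
  assumes str: "strengths A v \<phi>" and a: "a \<in> A" and b: "b \<in> A" and rab: "r b = r a + 1"
    and K0: "KK a b = 0" and e0: "\<forall>z\<in>A-{a,b}. turnout v a z - turnout v b z = 0"
  shows "\<phi> a = \<phi> b"
proof -
  have ab: "a \<noteq> b" using rab by auto
  obtain s where s: "maximizing_seq A v s" using get_max[OF a] by blast
  define t where "t n = (s n)(a := s n b, b := s n a)" for n
  have tP: "t n \<in> Phi A" for n
    unfolding t_def using swap_Phi[OF a b ab maxseq_Phi[OF s]] by simp
  have "zermelo_F A v (s n) \<le> zermelo_F A v (t n)" for n
    unfolding t_def using swap_ge[OF a b rab maxseq_Phi[OF s]] K0 e0 by simp
  then have t: "maximizing_seq A v t"
    by (intro max_transfer[OF fin ll s tP] always_eventually allI)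
  have "(\<lambda>n. t n a) \<longlonglongrightarrow> \<phi> a" by (rule phi_limits[OF str t a])
  moreover have "(\<lambda>n. t n a) = (\<lambda>n. s n b)" unfolding t_def using ab by auto
  ultimately have "(\<lambda>n. s n b) \<longlonglongrightarrow> \<phi> a" by simp
  moreover have "(\<lambda>n. s n b) \<longlonglongrightarrow> \<phi> b" by (rule phi_limits[OF str s b])
  ultimately show ?thesis by (rule LIMSEQ_unique)
qed

end



context clc_ctx begin

lemma phi_strict:
  assumes str: "strengths A v \<phi>" and a: "a \<in> A" and b: "b \<in> A" and rab: "r b = r a + 1"
    and Kp: "KK a b > 0" and eq: "\<phi> a = \<phi> b"
  shows "\<phi> a \<le> 0"
proof (rule ccontr)
  assume "\<not> \<phi> a \<le> 0"
  define c where "c = \<phi> a"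
  have c: "c > 0" using \<open>\<not> \<phi> a \<le> 0\<close> unfolding c_def by simp
  have ab: "a \<noteq> b" using rab by auto
  define nn where "nn = real (card A) - 1"
  have nn: "nn \<ge> 1" using card_minus2[OF a b ab] unfolding nn_def by linarith
  define K where "K = KK a b"
  have K: "K > 0" using Kp unfolding K_def .
  define \<delta> where "\<delta> = min (c/4) (K * c / (16 * nn))"
  have dpos: "\<delta> > 0" unfolding \<delta>_def using c K nn by simp
  have d1: "\<delta> \<le> c/4" and d2: "\<delta> \<le> K * c / (16 * nn)" unfolding \<delta>_def by auto
  obtain s where s: "maximizing_seq A v s" using get_max[OF a] by blast
  obtain t where t: "maximizing_seq A v t" "\<And>n. t n b \<le> t n a"
    using sorted_seq[OF a b rab s] by blast
  have ta: "(\<lambda>n. t n a) \<longlonglongrightarrow> c" unfolding c_def by (rule phi_limits[OF str t(1) a])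
  have tb: "(\<lambda>n. t n b) \<longlonglongrightarrow> c" unfolding c_def eq by (rule phi_limits[OF str t(1) b])
  have ev1: "\<forall>\<^sub>F n in sequentially. c/2 < t n b" using order_tendstoD(1)[OF tb, of "c/2"] c by simp
  have "(\<lambda>n. t n a - t n b) \<longlonglongrightarrow> c - c" by (intro tendsto_diff ta tb)
  then have ev2: "\<forall>\<^sub>F n in sequentially. t n a - t n b < \<delta>" using order_tendstoD(2) dpos by simp
  define w where "w n = (if c/2 < t n b \<and> t n a - t n b < \<delta> then (t n)(a := t n a + \<delta>, b := t n b - \<delta>) else t n)" for n
  have tP: "t n \<in> Phi A" for n by (rule maxseq_Phi[OF t(1)])
  have good: "(t n)(a := t n a + \<delta>, b := t n b - \<delta>) \<in> Phi A \<and>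
      zermelo_F A v (t n) \<le> zermelo_F A v ((t n)(a := t n a + \<delta>, b := t n b - \<delta>))"
    if h: "c/2 < t n b" "t n a - t n b < \<delta>" for n
  proof -
    define p where "p = t n a"
    define q where "q = t n b"
    have pos: "\<forall>x\<in>A. t n x > 0" by (rule Phi_pos[OF tP])
    have qp: "q \<le> p" unfolding p_def q_def by (rule t(2))
    have q: "q > c/2" using h unfolding q_def by simp
    have p: "p > 0" using q qp c by simp
    have p': "p + \<delta> > 0" using p dpos by simp
    have q': "q - \<delta> > 0" using q d1 c by simp
    have sumeq: "(p + \<delta>) + (q - \<delta>) = t n a + t n b" unfolding p_def q_def by simp
    have prod: "(p + \<delta>) * (q - \<delta>) \<le> t n a * t n b"
    proof -
      have "(p + \<delta>) * (q - \<delta>) = p * q + \<delta> * (q - p) - \<delta> * \<delta>" by (simp add: algebra_simps)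
      moreover have "\<delta> * (q - p) \<le> 0" using dpos qp by (simp add: mult_nonneg_nonpos)
      moreover have "\<delta> * \<delta> \<ge> 0" by simp
      ultimately show ?thesis unfolding p_def q_def by linarith
    qed
    have Phi': "(t n)(a := t n a + \<delta>, b := t n b - \<delta>) \<in> Phi A"
      using upd_Phi[OF fin tP a b ab p' q' sumeq] unfolding p_def q_def .
    have ex: "LL A v ((t n)(a := p + \<delta>, b := q - \<delta>)) - LL A v (t n) \<ge>
       KK a b * (ln (p + \<delta>) - ln (t n a)) - (real (card A) - 1) * (ln (t n a * t n b) - ln ((p + \<delta>) * (q - \<delta>)))"
      by (rule exchange[OF a b rab pos p' q' sumeq prod]) (simp add: p_def dpos less_imp_le)
    have nb: "nn * (ln (p * q) - ln ((p + \<delta>) * (q - \<delta>))) \<le> K * (ln (p + \<delta>) - ln p)"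
    proof (rule num_bound[OF K nn])
      show "q > 0" using q c by simp
      show "q \<le> p" by (rule qp)
      show "p - q \<le> \<delta>" using h unfolding p_def q_def by simp
      show "\<delta> > 0" by (rule dpos)
      show "\<delta> \<le> q / 2" using d1 q by simp
      have "K * c / (16 * nn) \<le> K * q / (8 * nn)" using K nn q c by (simp add: field_simps)
      then show "\<delta> \<le> K * q / (8 * nn)" using d2 by simp
    qed
    have "LL A v (t n) \<le> LL A v ((t n)(a := t n a + \<delta>, b := t n b - \<delta>))"
      using ex nb unfolding p_def q_def K_def nn_def by simp
    then show ?thesis using Phi' F_mono_LL[OF tP Phi'] by simp
  qed
  have wP: "w n \<in> Phi A" for n unfolding w_def using good tP by simp
  have "\<forall>\<^sub>F n in sequentially. zermelo_F A v (t n) \<le> zermelo_F A v (w n)"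
    unfolding w_def using good by simp
  then have w: "maximizing_seq A v w" by (rule max_transfer[OF fin ll t(1) wP])
  have "(\<lambda>n. w n a) \<longlonglongrightarrow> c" unfolding c_def by (rule phi_limits[OF str w a])
  moreover have "(\<lambda>n. w n a) \<longlonglongrightarrow> c + \<delta>"
  proof -
    have "\<forall>\<^sub>F n in sequentially. t n a + \<delta> = w n a"
      using eventually_conj[OF ev1 ev2] by eventually_elim (simp add: w_def ab)
    moreover have "(\<lambda>n. t n a + \<delta>) \<longlonglongrightarrow> c + \<delta>" by (intro tendsto_add ta tendsto_const)
    ultimately show ?thesis by (blast intro: Lim_transform_eventually)
  qed
  ultimately have "c = c + \<delta>" by (rule LIMSEQ_unique)
  then show False using dpos by simp
qed

end



context clc_ctx begin

lemma rho_diff: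
  assumes a: "a \<in> A" and b: "b \<in> A" and rab: "r b = r a + 1"
  shows "(\<Sum>y\<in>A-{a}. v a y) - (\<Sum>y\<in>A-{b}. v b y) = margin v a b + (\<Sum>z\<in>A-{a,b}. v a z - v b z)"
proof -
  have ab: "a \<noteq> b" using rab by auto
  have "(\<Sum>y\<in>A-{a}. v a y) = v a b + (\<Sum>z\<in>A-{a}-{b}. v a z)" using fin a b ab by (intro sum.remove) auto
  moreover have "A-{a}-{b} = A-{a,b}" by auto
  moreover have "(\<Sum>y\<in>A-{b}. v b y) = v b a + (\<Sum>z\<in>A-{b}-{a}. v b z)" using fin a b ab by (intro sum.remove) auto
  moreover have "A-{b}-{a} = A-{a,b}" by auto
  ultimately show ?thesis by (simp add: margin_def sum_subtractf)
qed

lemma consec_all: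
  assumes str: "strengths A v \<phi>" and a: "a \<in> A" and b: "b \<in> A" and rab: "r b = r a + 1"
  shows "mean_score A v b \<le> mean_score A v a \<and> \<phi> b \<le> \<phi> a \<and>
     (mean_score A v a = mean_score A v b \<longrightarrow> \<phi> a = \<phi> b) \<and>
     (mean_score A v a > mean_score A v b \<longrightarrow> \<phi> a > \<phi> b \<or> \<phi> b = 0)"
proof -
  have ab: "a \<noteq> b" using rab by auto
  define nn where "nn = real (card A) - 1"
  have nn: "nn \<ge> 1" using card_minus2[OF a b ab] unfolding nn_def by linarith
  define M where "M = margin v a b + (\<Sum>z\<in>A-{a,b}. v a z - v b z)"
  have dz: "\<And>z. z \<in> A-{a,b} \<Longrightarrow> v a z - v b z \<ge> 0" using consec_d(1)[OF a b rab] by auto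
  have m0: "margin v a b \<ge> 0" by (rule consec_m[OF a b rab])
  have sd0: "(\<Sum>z\<in>A-{a,b}. v a z - v b z) \<ge> 0" using dz by (intro sum_nonneg) auto
  have M0: "M \<ge> 0" unfolding M_def using m0 sd0 by simp
  have rho: "mean_score A v a - mean_score A v b = M / nn"
    unfolding mean_score_def M_def nn_def using rho_diff[OF a b rab] by (simp add: diff_divide_distrib[symmetric])
  have mono: "\<phi> b \<le> \<phi> a" by (rule phi_mono[OF str a b rab])
  have phinn: "\<phi> b \<ge> 0" "\<phi> a \<ge> 0" using str a b unfolding strengths_def by auto
  have p1: "mean_score A v b \<le> mean_score A v a" using rho divide_nonneg_pos[of M nn] M0 nn by linarith
  have p3: "\<phi> a = \<phi> b" if h: "mean_score A v a = mean_score A v b"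
  proof -
    have "M / nn = 0" using rho h by simp
    then have M00: "M = 0" using nn by simp
    then have mz: "margin v a b = 0" and sz: "(\<Sum>z\<in>A-{a,b}. v a z - v b z) = 0"
      using m0 sd0 unfolding M_def by linarith+
    have dz0: "\<forall>z\<in>A-{a,b}. v a z - v b z = 0" using sz dz fin by (subst (asm) sum_nonneg_eq_0_iff) auto
    have ez: "\<forall>z\<in>A-{a,b}. turnout v a z - turnout v b z = 0"
      using consec_e[OF a b rab] mz by force
    have "KK a b = 0" unfolding KK_def using mz dz0 ez by simp
    then show ?thesis using phi_clone[OF str a b rab _ ez] by simp
  qed
  have p4: "\<phi> a > \<phi> b \<or> \<phi> b = 0" if h: "mean_score A v a > mean_score A v b"
  proof -
    have "M / nn > 0" using rho h by simp
    then have Mp: "M > 0" using nn by (simp add: zero_less_divide_iff)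
    have sde: "(\<Sum>z\<in>A-{a,b}. (v a z - v b z) - (turnout v a z - turnout v b z)) \<ge> 0"
      using consec_d(2)[OF a b rab] by (intro sum_nonneg) (auto simp: turnout_def)
    have "KK a b > 0"
    proof (cases "margin v a b = 0")
      case True
      have ez: "\<forall>z\<in>A-{a,b}. turnout v a z - turnout v b z = 0"
        using consec_e[OF a b rab] True by force
      have "KK a b = M" unfolding KK_def M_def using ez True by simp
      then show ?thesis using Mp by simp
    next
      case False
      then have "margin v a b > 0" using m0 by simp
      then show ?thesis unfolding KK_def using sde by simp
    qed
    then have "\<phi> a = \<phi> b \<longrightarrow> \<phi> a \<le> 0" using phi_strict[OF str a b rab] by blast
    then show ?thesis using mono phinn by linarith
  qed
  show ?thesis using p1 mono p3 p4 by blast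
qed

lemma chain:
  assumes str: "strengths A v \<phi>"
  shows "x \<in> A \<Longrightarrow> y \<in> A \<Longrightarrow> r y = r x + k \<Longrightarrow>
     mean_score A v y \<le> mean_score A v x \<and> \<phi> y \<le> \<phi> x \<and>
     (mean_score A v x = mean_score A v y \<longrightarrow> \<phi> x = \<phi> y) \<and>
     (mean_score A v x > mean_score A v y \<longrightarrow> \<phi> x > \<phi> y \<or> \<phi> y = 0)"
proof (induction k arbitrary: y)
  case 0
  then have "x = y" using r_inj by simp
  then show ?case by simp
next
  case (Suc k)
  have "r y < card A" using bij Suc.prems(2) by (auto simp: bij_betw_def)
  then have "r x + k \<in> r ` A" using bij Suc.prems(3) by (auto simp: bij_betw_def)
  then obtain w where w: "w \<in> A" "r w = r x + k" by auto
  have IH: "mean_score A v w \<le> mean_score A v x \<and> \<phi> w \<le> \<phi> x \<and>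
     (mean_score A v x = mean_score A v w \<longrightarrow> \<phi> x = \<phi> w) \<and>
     (mean_score A v x > mean_score A v w \<longrightarrow> \<phi> x > \<phi> w \<or> \<phi> w = 0)"
    using Suc.IH[OF Suc.prems(1) w] .
  have st: "mean_score A v y \<le> mean_score A v w \<and> \<phi> y \<le> \<phi> w \<and>
     (mean_score A v w = mean_score A v y \<longrightarrow> \<phi> w = \<phi> y) \<and>
     (mean_score A v w > mean_score A v y \<longrightarrow> \<phi> w > \<phi> y \<or> \<phi> y = 0)"
    using consec_all[OF str w(1) Suc.prems(2)] w Suc.prems(3) by simp
  have nn: "\<phi> y \<ge> 0" "\<phi> w \<ge> 0" using str w Suc.prems unfolding strengths_def by auto
  show ?case using IH st nn by (smt (verit))
qed

end

theorem theorem3p5: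
  fixes A :: "'a set" and v :: "'a \<Rightarrow> 'a \<Rightarrow> real" and \<phi> :: "'a \<Rightarrow> real"
  assumes "finite A" and "card A \<ge> 2"
    and "llull_matrix A v" and "has_CLC A v"
    and "\<exists>x\<in>A. \<exists>y\<in>A. x \<noteq> y \<and> v x y \<noteq> 0"
    and "strengths A v \<phi>"
    and "x \<in> A" and "y \<in> A"
  shows "(\<phi> x > \<phi> y \<longrightarrow> mean_score A v x > mean_score A v y) \<and>
         (mean_score A v x > mean_score A v y \<longrightarrow>
            \<phi> x > \<phi> y \<or> (\<phi> x = 0 \<and> \<phi> y = 0))"
proof -
  obtain r where r: "clc_order A v r" using assms(4) unfolding has_CLC_def by blast
  interpret clc_ctx A v r using assms(1,3) r by unfold_locales
  have nn: "\<phi> x \<ge> 0" "\<phi> y \<ge> 0" using assms(6,7,8) unfolding strengths_def by auto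
  consider "r x \<le> r y" | "r y \<le> r x" by linarith
  then show ?thesis
  proof cases
    case 1
    then obtain k where "r y = r x + k" using le_iff_add by blast
    from chain[OF assms(6) assms(7) assms(8) this] nn show ?thesis by (smt (verit))
  next
    case 2
    then obtain k where "r x = r y + k" using le_iff_add by blast
    from chain[OF assms(6) assms(8) assms(7) this] nn show ?thesis by (smt (verit))
  qed
qed



end
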